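(* A finite dismantlable lattice $L$ has nullity $\eta(L)=r$ if and only if $L$ is an adjunct of $r+1$ chains, i.e. $L = C_0\,]_{a_1}^{b_1}\,C_1\,]_{a_2}^{b_2}\,C_2 \cdots ]_{a_r}^{b_r}\,C_r$ for chains $C_0,\dots,C_r$ and adjunct pairs $(a_i,b_i)$.
   Context: The nullity of a graph $G$ is $|E(G)|-|V(G)|+c$ with $c$ the number of connected components; the nullity $\eta(P)$ of a finite poset $P$ is the nullity of its cover graph (the undirected graph on $P$ whose edges are the covering pairs $a\prec b$). Adjunct operation: for disjoint lattices $L_1,L_2$ and $a<b$ in $L_1$ with $b$ not covering $a$, $L_1\,]_{a}^{b}\,L_2$ is $L_1\cup L_2$ ordered by: $x\le y$ iff $x\le y$ in $L_1$ (both in $L_1$), or $x\le y$ in $L_2$ (both in $L_2$), or $x\in L_1,y\in L_2,x\le a$, or $x\in L_2,y\in L_1,b\le y$. Iterated adjuncts are read left to right, each adjunct pair $(a_i,b_i)$ lying in the lattice built so far. A finite lattice $L$ with $n$ elements is dismantlable if there is a chain of sublattices $L_1\subset L_2\subset\cdots\subset L_n=L$ with $|L_i|=i$. (It is known that a finite lattice is dismantlable iff it is an adjunct of chains.) *)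

theory Defs
  imports Main
begin

text \<open>A finite poset/lattice is represented by a carrier set A and an order relation le,
  only the restriction of le to A being relevant.\<close>

definition partial_order_on' :: "'a set \<Rightarrow> ('a \<Rightarrow> 'a \<Rightarrow> bool) \<Rightarrow> bool" where
  "partial_order_on' A le \<longleftrightarrow>
     (\<forall>x\<in>A. le x x) \<and>
     (\<forall>x\<in>A. \<forall>y\<in>A. le x y \<and> le y x \<longrightarrow> x = y) \<and>
     (\<forall>x\<in>A. \<forall>y\<in>A. \<forall>z\<in>A. le x y \<and> le y z \<longrightarrow> le x z)"

definition is_lub :: "'a set \<Rightarrow> ('a \<Rightarrow> 'a \<Rightarrow> bool) \<Rightarrow> 'a \<Rightarrow> 'a \<Rightarrow> 'a \<Rightarrow> bool" where
  "is_lub A le x y z \<longleftrightarrow> z \<in> A \<and> le x z \<and> le y z \<and>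
     (\<forall>w\<in>A. le x w \<and> le y w \<longrightarrow> le z w)"

definition is_glb :: "'a set \<Rightarrow> ('a \<Rightarrow> 'a \<Rightarrow> bool) \<Rightarrow> 'a \<Rightarrow> 'a \<Rightarrow> 'a \<Rightarrow> bool" where
  "is_glb A le x y z \<longleftrightarrow> z \<in> A \<and> le z x \<and> le z y \<and>
     (\<forall>w\<in>A. le w x \<and> le w y \<longrightarrow> le w z)"

definition finite_lattice :: "'a set \<Rightarrow> ('a \<Rightarrow> 'a \<Rightarrow> bool) \<Rightarrow> bool" where
  "finite_lattice A le \<longleftrightarrow> finite A \<and> A \<noteq> {} \<and> partial_order_on' A le \<and>
     (\<forall>x\<in>A. \<forall>y\<in>A. (\<exists>z. is_lub A le x y z) \<and> (\<exists>z. is_glb A le x y z))"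

definition sublattice :: "'a set \<Rightarrow> ('a \<Rightarrow> 'a \<Rightarrow> bool) \<Rightarrow> 'a set \<Rightarrow> bool" where
  "sublattice A le S \<longleftrightarrow> S \<subseteq> A \<and>
     (\<forall>x\<in>S. \<forall>y\<in>S. \<forall>z. (is_lub A le x y z \<longrightarrow> z \<in> S) \<and> (is_glb A le x y z \<longrightarrow> z \<in> S))"

definition dismantlable :: "'a set \<Rightarrow> ('a \<Rightarrow> 'a \<Rightarrow> bool) \<Rightarrow> bool" where
  "dismantlable A le \<longleftrightarrow> finite_lattice A le \<and>
     (\<exists>L :: nat \<Rightarrow> 'a set.
        (\<forall>i\<in>{1..card A}. sublattice A le (L i) \<and> card (L i) = i) \<and>
        (\<forall>i. 1 \<le> i \<and> i < card A \<longrightarrow> L i \<subset> L (Suc i)) \<and>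
        L (card A) = A)"

definition is_chain :: "'a set \<Rightarrow> ('a \<Rightarrow> 'a \<Rightarrow> bool) \<Rightarrow> bool" where
  "is_chain C le \<longleftrightarrow> finite C \<and> C \<noteq> {} \<and> partial_order_on' C le \<and>
     (\<forall>x\<in>C. \<forall>y\<in>C. le x y \<or> le y x)"

definition covers :: "'a set \<Rightarrow> ('a \<Rightarrow> 'a \<Rightarrow> bool) \<Rightarrow> 'a \<Rightarrow> 'a \<Rightarrow> bool" where
  "covers A le a b \<longleftrightarrow> a \<in> A \<and> b \<in> A \<and> le a b \<and> a \<noteq> b \<and>
     \<not> (\<exists>c\<in>A. le a c \<and> le c b \<and> c \<noteq> a \<and> c \<noteq> b)"

definition cover_edges :: "'a set \<Rightarrow> ('a \<Rightarrow> 'a \<Rightarrow> bool) \<Rightarrow> 'a set set" where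
  "cover_edges A le = {{a, b} | a b. covers A le a b}"

definition cover_adj :: "'a set \<Rightarrow> ('a \<Rightarrow> 'a \<Rightarrow> bool) \<Rightarrow> ('a \<times> 'a) set" where
  "cover_adj A le = {(x, y). covers A le x y \<or> covers A le y x}"

definition cover_components :: "'a set \<Rightarrow> ('a \<Rightarrow> 'a \<Rightarrow> bool) \<Rightarrow> 'a set set" where
  "cover_components A le = A // ((cover_adj A le)\<^sup>*)"

definition nullity :: "'a set \<Rightarrow> ('a \<Rightarrow> 'a \<Rightarrow> bool) \<Rightarrow> int" where
  "nullity A le = int (card (cover_edges A le)) - int (card A)
                  + int (card (cover_components A le))"

definition adjunct_rel ::
  "'a set \<Rightarrow> ('a \<Rightarrow> 'a \<Rightarrow> bool) \<Rightarrow> 'a set \<Rightarrow> ('a \<Rightarrow> 'a \<Rightarrow> bool) \<Rightarrow> 'a \<Rightarrow> 'a \<Rightarrow> ('a \<Rightarrow> 'a \<Rightarrow> bool)" where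
  "adjunct_rel A le C leC a b = (\<lambda>x y.
      (x \<in> A \<and> y \<in> A \<and> le x y) \<or> (x \<in> C \<and> y \<in> C \<and> leC x y) \<or>
      (x \<in> A \<and> y \<in> C \<and> le x a) \<or> (x \<in> C \<and> y \<in> A \<and> le b y))"

text \<open>adj_chains A le k: (A, le) is C_0 ]_{a_1}^{b_1} C_1 ... ]_{a_k}^{b_k} C_k for chains C_i,
  built left to right, each adjunct pair lying in the lattice built so far.\<close>
inductive adj_chains :: "'a set \<Rightarrow> ('a \<Rightarrow> 'a \<Rightarrow> bool) \<Rightarrow> nat \<Rightarrow> bool" where
  base: "is_chain C le \<Longrightarrow> adj_chains C le 0"
| step: "\<lbrakk> adj_chains A le k; is_chain C leC; A \<inter> C = {};
           a \<in> A; b \<in> A; le a b; a \<noteq> b; \<not> covers A le a b \<rbrakk>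
         \<Longrightarrow> adj_chains (A \<union> C) (adjunct_rel A le C leC a b) (Suc k)"

definition adjunct_of_chains :: "'a set \<Rightarrow> ('a \<Rightarrow> 'a \<Rightarrow> bool) \<Rightarrow> nat \<Rightarrow> bool" where
  "adjunct_of_chains A le k \<longleftrightarrow>
     (\<exists>le'. adj_chains A le' k \<and> (\<forall>x\<in>A. \<forall>y\<in>A. le x y \<longleftrightarrow> le' x y))"

end

theory Submission
  imports Defs
begin



lemma po_adjunct:
  assumes "partial_order_on' A le" "partial_order_on' C leC" "A \<inter> C = {}"
    "a \<in> A" "b \<in> A" "le a b" "a \<noteq> b"
  shows "partial_order_on' (A \<union> C) (adjunct_rel A le C leC a b)"
  using assms unfolding partial_order_on'_def adjunct_rel_def
  by (smt (verit) disjoint_iff UnE)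

lemma adj_chains_po:
  "adj_chains A R k \<Longrightarrow> partial_order_on' A R \<and> finite A \<and> A \<noteq> {}"
proof (induction rule: adj_chains.induct)
  case (base C le) then show ?case by (auto simp: is_chain_def)
next
  case (step A le k C leC a b) then show ?case
    using po_adjunct[of A le C leC a b] by (auto simp: is_chain_def)
qed




lemma cover_below_exists:
  assumes fin: "finite A" and po: "partial_order_on' A le"
  shows "y \<in> A \<Longrightarrow> x \<in> A \<Longrightarrow> le y x \<Longrightarrow> y \<noteq> x \<Longrightarrow> \<exists>z\<in>A. le y z \<and> covers A le z x"
proof (induction "card {w\<in>A. le y w \<and> le w x \<and> w \<noteq> x}" arbitrary: y rule: less_induct)
  case less
  show ?case
  proof (cases "covers A le y x")
    case True then show ?thesis using less po unfolding partial_order_on'_def by blast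
  next
    case False
    then obtain c where c: "c \<in> A" "le y c" "le c x" "c \<noteq> y" "c \<noteq> x"
      using less unfolding covers_def by blast
    have sub: "{w\<in>A. le c w \<and> le w x \<and> w \<noteq> x} \<subset> {w\<in>A. le y w \<and> le w x \<and> w \<noteq> x}"
    proof
      show "{w\<in>A. le c w \<and> le w x \<and> w \<noteq> x} \<subseteq> {w\<in>A. le y w \<and> le w x \<and> w \<noteq> x}"
        using po c less.prems unfolding partial_order_on'_def by blast
      have "y \<notin> {w\<in>A. le c w \<and> le w x \<and> w \<noteq> x}"
        using po c less.prems unfolding partial_order_on'_def by blast
      moreover have "y \<in> {w\<in>A. le y w \<and> le w x \<and> w \<noteq> x}"
        using po less.prems unfolding partial_order_on'_def by blast
      ultimately show "{w\<in>A. le c w \<and> le w x \<and> w \<noteq> x} \<noteq> {w\<in>A. le y w \<and> le w x \<and> w \<noteq> x}" by blast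
    qed
    have "card {w\<in>A. le c w \<and> le w x \<and> w \<noteq> x} < card {w\<in>A. le y w \<and> le w x \<and> w \<noteq> x}"
      using sub fin by (intro psubset_card_mono) auto
    from less.hyps[OF this c(1) less.prems(2) c(3) c(5)] obtain z where
      "z \<in> A" "le c z" "covers A le z x" by blast
    then show ?thesis using po c less.prems unfolding partial_order_on'_def covers_def by blast
  qed
qed

lemma cover_above_exists:
  assumes fin: "finite A" and po: "partial_order_on' A le"
  shows "x \<in> A \<Longrightarrow> y \<in> A \<Longrightarrow> le x y \<Longrightarrow> x \<noteq> y \<Longrightarrow> \<exists>z\<in>A. le z y \<and> covers A le x z"
proof (induction "card {w\<in>A. le x w \<and> le w y \<and> w \<noteq> x}" arbitrary: y rule: less_induct)
  case less
  show ?case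
  proof (cases "covers A le x y")
    case True then show ?thesis using less po unfolding partial_order_on'_def by blast
  next
    case False
    then obtain c where c: "c \<in> A" "le x c" "le c y" "c \<noteq> y" "c \<noteq> x"
      using less unfolding covers_def by blast
    have sub: "{w\<in>A. le x w \<and> le w c \<and> w \<noteq> x} \<subset> {w\<in>A. le x w \<and> le w y \<and> w \<noteq> x}"
    proof
      show "{w\<in>A. le x w \<and> le w c \<and> w \<noteq> x} \<subseteq> {w\<in>A. le x w \<and> le w y \<and> w \<noteq> x}"
        using po c less.prems unfolding partial_order_on'_def by blast
      have "y \<notin> {w\<in>A. le x w \<and> le w c \<and> w \<noteq> x}"
        using po c less.prems unfolding partial_order_on'_def by blast
      moreover have "y \<in> {w\<in>A. le x w \<and> le w y \<and> w \<noteq> x}"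
        using po less.prems unfolding partial_order_on'_def by blast
      ultimately show "{w\<in>A. le x w \<and> le w c \<and> w \<noteq> x} \<noteq> {w\<in>A. le x w \<and> le w y \<and> w \<noteq> x}" by blast
    qed
    have "card {w\<in>A. le x w \<and> le w c \<and> w \<noteq> x} < card {w\<in>A. le x w \<and> le w y \<and> w \<noteq> x}"
      using sub fin by (intro psubset_card_mono) auto
    from less.hyps[OF this less.prems(1) c(1) c(2) c(5)[symmetric]] obtain z where
      "z \<in> A" "le z c" "covers A le x z" by blast
    then show ?thesis using po c less.prems unfolding partial_order_on'_def covers_def by blast
  qed
qed




lemma fl_po: "finite_lattice A le \<Longrightarrow> partial_order_on' A le"
  by (simp add: finite_lattice_def)

lemma below_connected:
  assumes fin: "finite A" and po: "partial_order_on' A le"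
  shows "y \<in> A \<Longrightarrow> x \<in> A \<Longrightarrow> le y x \<Longrightarrow> (y, x) \<in> (cover_adj A le)\<^sup>*"
proof (induction "card {w\<in>A. le y w \<and> le w x}" arbitrary: x rule: less_induct)
  case less
  show ?case
  proof (cases "y = x")
    case True then show ?thesis by simp
  next
    case False
    then obtain z where z: "z \<in> A" "le y z" "covers A le z x"
      using cover_below_exists[OF fin po less.prems] by blast
    have zx: "le z x" "z \<noteq> x" using z(3) by (auto simp: covers_def)
    have trans: "\<And>u v w. u \<in> A \<Longrightarrow> v \<in> A \<Longrightarrow> w \<in> A \<Longrightarrow> le u v \<Longrightarrow> le v w \<Longrightarrow> le u w"
      and anti: "\<And>u v. u \<in> A \<Longrightarrow> v \<in> A \<Longrightarrow> le u v \<Longrightarrow> le v u \<Longrightarrow> u = v"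
      using po unfolding partial_order_on'_def by blast+
    have sub: "{w\<in>A. le y w \<and> le w z} \<subset> {w\<in>A. le y w \<and> le w x}"
    proof
      show "{w\<in>A. le y w \<and> le w z} \<subseteq> {w\<in>A. le y w \<and> le w x}"
        using trans z(1) zx less.prems by blast
      have "\<not> le x z"
        using anti z(1) zx less.prems by blast
      then have "x \<notin> {w\<in>A. le y w \<and> le w z}" by blast
      moreover have "x \<in> {w\<in>A. le y w \<and> le w x}"
        using po less.prems unfolding partial_order_on'_def by blast
      ultimately show "{w\<in>A. le y w \<and> le w z} \<noteq> {w\<in>A. le y w \<and> le w x}" by blast
    qed
    have "card {w\<in>A. le y w \<and> le w z} < card {w\<in>A. le y w \<and> le w x}"
      using sub fin by (intro psubset_card_mono) auto
    from less.hyps[OF this less.prems(1) z(1) z(2)] have "(y, z) \<in> (cover_adj A le)\<^sup>*" .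
    moreover have "(z, x) \<in> cover_adj A le" using z(3) by (simp add: cover_adj_def)
    ultimately show ?thesis by (rule rtrancl_into_rtrancl)
  qed
qed

lemma covers_mem: "covers A le a b \<Longrightarrow> a \<in> A \<and> b \<in> A"
  by (simp add: covers_def)

lemma cover_adj_sym: "(y, z) \<in> cover_adj A le \<Longrightarrow> (z, y) \<in> cover_adj A le"
  by (simp add: cover_adj_def disj_commute)

lemma cover_adj_mem: "(y, z) \<in> cover_adj A le \<Longrightarrow> z \<in> A"
  by (auto simp add: cover_adj_def dest: covers_mem)

lemma cover_adj_sym_rtrancl:
  "(x, y) \<in> (cover_adj A le)\<^sup>* \<Longrightarrow> (y, x) \<in> (cover_adj A le)\<^sup>*"
proof -
  have "sym (cover_adj A le)" by (rule symI) (rule cover_adj_sym)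
  then have "sym ((cover_adj A le)\<^sup>*)" by (rule sym_rtrancl)
  then show "(x, y) \<in> (cover_adj A le)\<^sup>* \<Longrightarrow> (y, x) \<in> (cover_adj A le)\<^sup>*" by (rule symD)
qed

lemma cover_adj_closed:
  "(x, y) \<in> (cover_adj A le)\<^sup>* \<Longrightarrow> x \<in> A \<Longrightarrow> y \<in> A"
  apply (erule rtrancl_induct)
   apply assumption
  apply (erule cover_adj_mem)
  done

lemma lattice_components:
  assumes "finite_lattice A le"
  shows "cover_components A le = {A}"
proof -
  have fin: "finite A" and po: "partial_order_on' A le" and ne: "A \<noteq> {}"
    and gl: "\<forall>x\<in>A. \<forall>y\<in>A. (\<exists>z. is_lub A le x y z) \<and> (\<exists>z. is_glb A le x y z)"
    using assms unfolding finite_lattice_def by blast+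
  have conn: "(x, y) \<in> (cover_adj A le)\<^sup>*" if "x \<in> A" "y \<in> A" for x y
  proof -
    have "\<exists>z. is_glb A le x y z" using gl that(1) that(2) by simp
    then obtain g where g: "is_glb A le x y g" ..
    then have gA: "g \<in> A" and gx: "le g x" and gy: "le g y" unfolding is_glb_def by blast+
    have 1: "(g, x) \<in> (cover_adj A le)\<^sup>*" by (rule below_connected[OF fin po gA that(1) gx])
    have 2: "(g, y) \<in> (cover_adj A le)\<^sup>*" by (rule below_connected[OF fin po gA that(2) gy])
    from cover_adj_sym_rtrancl[OF 1] 2 show ?thesis by (rule rtrancl_trans)
  qed
  have eq: "(cover_adj A le)\<^sup>* `` {x} = A" if "x \<in> A" for x
  proof
    show "(cover_adj A le)\<^sup>* `` {x} \<subseteq> A"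
    proof
      fix y assume "y \<in> (cover_adj A le)\<^sup>* `` {x}"
      then have "(x, y) \<in> (cover_adj A le)\<^sup>*" by simp
      then show "y \<in> A" using cover_adj_closed that by metis
    qed
    show "A \<subseteq> (cover_adj A le)\<^sup>* `` {x}"
    proof
      fix y assume "y \<in> A"
      then have "(x, y) \<in> (cover_adj A le)\<^sup>*" using conn that by simp
      then show "y \<in> (cover_adj A le)\<^sup>* `` {x}" by simp
    qed
  qed
  have "A // (cover_adj A le)\<^sup>* = {A}"
  proof
    show "A // (cover_adj A le)\<^sup>* \<subseteq> {A}" unfolding quotient_def using eq by auto
    obtain x where "x \<in> A" using ne by auto
    then show "{A} \<subseteq> A // (cover_adj A le)\<^sup>*" unfolding quotient_def using eq by auto
  qed
  then show ?thesis unfolding cover_components_def .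
qed

lemma nullity_lattice:
  "finite_lattice A le \<Longrightarrow> nullity A le = int (card (cover_edges A le)) - int (card A) + 1"
  by (simp add: nullity_def lattice_components)




lemma po_trans: "partial_order_on' A le \<Longrightarrow> x \<in> A \<Longrightarrow> y \<in> A \<Longrightarrow> z \<in> A \<Longrightarrow> le x y \<Longrightarrow> le y z \<Longrightarrow> le x z"
  unfolding partial_order_on'_def by blast
lemma po_anti: "partial_order_on' A le \<Longrightarrow> x \<in> A \<Longrightarrow> y \<in> A \<Longrightarrow> le x y \<Longrightarrow> le y x \<Longrightarrow> x = y"
  unfolding partial_order_on'_def by blast
lemma po_refl: "partial_order_on' A le \<Longrightarrow> x \<in> A \<Longrightarrow> le x x"
  unfolding partial_order_on'_def by blast

lemma minimal_exists:
  assumes po: "partial_order_on' A le" and fin: "finite S" and ne: "S \<noteq> {}" and sub: "S \<subseteq> A"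
  shows "\<exists>m\<in>S. \<forall>w\<in>S. le w m \<longrightarrow> w = m"
proof -
  define f where "f w = card {u\<in>S. le u w}" for w
  have "finite (f ` S)" "f ` S \<noteq> {}" using fin ne by auto
  then have "Min (f ` S) \<in> f ` S" by (rule Min_in)
  then obtain m where m: "m \<in> S" "f m = Min (f ` S)" by auto
  have "w = m" if w: "w \<in> S" "le w m" for w
  proof (rule ccontr)
    assume ne: "w \<noteq> m"
    have "{u\<in>S. le u w} \<subseteq> {u\<in>S. le u m}"
      using po_trans[OF po] w m sub by blast
    moreover have "m \<notin> {u\<in>S. le u w}" using po_anti[OF po] w m sub ne by blast
    moreover have "m \<in> {u\<in>S. le u m}" using po_refl[OF po] m sub by blast
    ultimately have "{u\<in>S. le u w} \<subset> {u\<in>S. le u m}" by blast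
    then have "f w < f m" unfolding f_def using fin by (intro psubset_card_mono) auto
    moreover have "f m \<le> f w" using m w \<open>finite (f ` S)\<close> by simp
    ultimately show False by simp
  qed
  then show ?thesis using m by blast
qed

lemma maximal_exists:
  assumes po: "partial_order_on' A le" and fin: "finite S" and ne: "S \<noteq> {}" and sub: "S \<subseteq> A"
  shows "\<exists>m\<in>S. \<forall>w\<in>S. le m w \<longrightarrow> w = m"
proof -
  have po': "partial_order_on' A (\<lambda>x y. le y x)" using po unfolding partial_order_on'_def by blast
  show ?thesis using minimal_exists[OF po' fin ne sub] by simp
qed

lemma chain_po: "is_chain C le \<Longrightarrow> partial_order_on' C le"
  by (simp add: is_chain_def)

lemma chain_least:
  assumes "is_chain C le" shows "\<exists>m\<in>C. \<forall>w\<in>C. le m w"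
proof -
  have po: "partial_order_on' C le" and fin: "finite C" and ne: "C \<noteq> {}"
    and tot: "\<forall>x\<in>C. \<forall>y\<in>C. le x y \<or> le y x" using assms by (auto simp: is_chain_def)
  obtain m where m: "m \<in> C" "\<forall>w\<in>C. le w m \<longrightarrow> w = m"
    using minimal_exists[OF po fin ne subset_refl] by blast
  have "le m w" if "w \<in> C" for w using tot m that po_refl[OF po] by metis
  then show ?thesis using m by blast
qed

lemma chain_greatest:
  assumes "is_chain C le" shows "\<exists>m\<in>C. \<forall>w\<in>C. le w m"
proof -
  have "is_chain C (\<lambda>x y. le y x)" using assms unfolding is_chain_def partial_order_on'_def by blast
  then show ?thesis using chain_least by fastforce
qed




lemma covers_le: "covers A le a b \<Longrightarrow> le a b \<and> a \<noteq> b"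
  by (simp add: covers_def)

lemma covers_between: "covers A le a b \<Longrightarrow> c \<in> A \<Longrightarrow> le a c \<Longrightarrow> le c b \<Longrightarrow> c = a \<or> c = b"
  unfolding covers_def by blast

lemma chain_lc_unique:
  assumes ch: "is_chain C le" and c1: "covers C le u v" and c2: "covers C le u' v"
  shows "u = u'"
proof -
  have po: "partial_order_on' C le" and tot: "\<forall>x\<in>C. \<forall>y\<in>C. le x y \<or> le y x"
    using ch by (auto simp: is_chain_def)
  have u: "u \<in> C" "le u v" "u \<noteq> v" and u': "u' \<in> C" "le u' v" "u' \<noteq> v"
    using c1 c2 covers_mem covers_le by metis+
  from tot u(1) u'(1) have "le u u' \<or> le u' u" by blast
  then show ?thesis
  proof
    assume "le u u'" then show ?thesis using covers_between[OF c1 u'(1)] u' by metis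
  next
    assume "le u' u" then show ?thesis using covers_between[OF c2 u(1)] u by metis
  qed
qed

lemma chain_edges:
  assumes ch: "is_chain C le"
  shows "card (cover_edges C le) = card C - 1"
proof -
  have po: "partial_order_on' C le" and fin: "finite C"
    using ch by (auto simp: is_chain_def)
  obtain m where m: "m \<in> C" "\<forall>w\<in>C. le m w" using chain_least[OF ch] by blast
  define lc where "lc v = (SOME u. covers C le u v)" for v
  have lc: "covers C le (lc v) v" if "v \<in> C - {m}" for v
  proof -
    have "\<exists>z\<in>C. le m z \<and> covers C le z v"
      using cover_below_exists[OF fin po m(1)] that m by blast
    then have "\<exists>u. covers C le u v" by blast
    then show ?thesis unfolding lc_def by (rule someI_ex)
  qed
  define g where "g v = {lc v, v}" for v
  have eq: "cover_edges C le = g ` (C - {m})"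
  proof
    show "cover_edges C le \<subseteq> g ` (C - {m})"
    proof
      fix e assume "e \<in> cover_edges C le"
      then obtain a b where e: "e = {a, b}" and ab: "covers C le a b"
        unfolding cover_edges_def by blast
      have ab': "a \<in> C" "b \<in> C" "le a b" "a \<noteq> b" using ab covers_mem covers_le by metis+
      have "b \<noteq> m"
      proof
        assume "b = m" then have "le b a" using m ab' by blast
        then show False using po_anti[OF po] ab' by metis
      qed
      then have bC: "b \<in> C - {m}" using ab' by blast
      then have "lc b = a" using chain_lc_unique[OF ch lc[OF bC] ab] by simp
      then show "e \<in> g ` (C - {m})" using e bC unfolding g_def by blast
    qed
    show "g ` (C - {m}) \<subseteq> cover_edges C le"
      using lc unfolding g_def cover_edges_def by blast
  qed
  have inj: "inj_on g (C - {m})"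
  proof
    fix v w assume v: "v \<in> C - {m}" and w: "w \<in> C - {m}" and gvw: "g v = g w"
    show "v = w"
    proof (rule ccontr)
      assume "v \<noteq> w"
      then have "v = lc w" "w = lc v" using gvw unfolding g_def by (auto simp: doubleton_eq_iff)
      then have "le v w" "le w v" using lc[OF v] lc[OF w] covers_le by metis+
      then show False using po_anti[OF po] v w \<open>v \<noteq> w\<close> by blast
    qed
  qed
  have "card (cover_edges C le) = card (C - {m})" using eq inj card_image by metis
  also have "\<dots> = card C - 1" using m fin by simp
  finally show ?thesis .
qed




locale adjset =
  fixes A le C leC a b
  assumes po: "partial_order_on' A le" and ch: "is_chain C leC" and disj: "A \<inter> C = {}"
    and aA: "a \<in> A" and bA: "b \<in> A" and ab: "le a b" and anb: "a \<noteq> b"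
    and nc: "\<not> covers A le a b"
begin

abbreviation "R \<equiv> adjunct_rel A le C leC a b"

lemma R_AA: "u \<in> A \<Longrightarrow> v \<in> A \<Longrightarrow> R u v = le u v"
  using disj unfolding adjunct_rel_def by blast
lemma R_CC: "u \<in> C \<Longrightarrow> v \<in> C \<Longrightarrow> R u v = leC u v"
  using disj unfolding adjunct_rel_def by blast
lemma R_AC: "u \<in> A \<Longrightarrow> v \<in> C \<Longrightarrow> R u v = le u a"
  using disj unfolding adjunct_rel_def by blast
lemma R_CA: "u \<in> C \<Longrightarrow> v \<in> A \<Longrightarrow> R u v = le b v"
  using disj unfolding adjunct_rel_def by blast

lemma poC: "partial_order_on' C leC" using ch by (simp add: is_chain_def)

lemma aC: "a \<notin> C" and bC: "b \<notin> C" using aA bA disj by blast+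

lemma covers_iff:
  assumes mC: "mC \<in> C" "\<forall>w\<in>C. leC mC w" and MC: "MC \<in> C" "\<forall>w\<in>C. leC w MC"
  shows "covers (A \<union> C) R u v \<longleftrightarrow>
    covers A le u v \<or> covers C leC u v \<or> (u = a \<and> v = mC) \<or> (u = MC \<and> v = b)"
proof
  assume cv: "covers (A \<union> C) R u v"
  have u: "u \<in> A \<union> C" and v: "v \<in> A \<union> C" and Ruv: "R u v" and uv: "u \<noteq> v"
    using cv covers_mem covers_le by metis+
  have btw: "\<And>c. c \<in> A \<union> C \<Longrightarrow> R u c \<Longrightarrow> R c v \<Longrightarrow> c = u \<or> c = v"
    using cv covers_between by metis
  show "covers A le u v \<or> covers C leC u v \<or> (u = a \<and> v = mC) \<or> (u = MC \<and> v = b)"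
  proof (cases "u \<in> A")
    case uA: True
    show ?thesis
    proof (cases "v \<in> A")
      case vA: True
      have "covers A le u v"
        unfolding covers_def
      proof (intro conjI)
        show "le u v" using Ruv R_AA uA vA by simp
        show "\<not> (\<exists>c\<in>A. le u c \<and> le c v \<and> c \<noteq> u \<and> c \<noteq> v)"
          using btw R_AA uA vA by blast
      qed (use uA vA uv in auto)
      then show ?thesis by blast
    next
      case vA: False
      then have vC: "v \<in> C" using v by blast
      have "le u a" using Ruv R_AC uA vC by simp
      moreover have "R a v" using R_AC[OF aA vC] po_refl[OF po aA] by simp
      ultimately have "a = u \<or> a = v" using btw[of a] aA R_AA uA by blast
      then have ua: "u = a" using aC vC by blast
      have "R u mC" using R_AC[OF uA mC(1)] ua po_refl[OF po aA] by simp
      moreover have "R mC v" using R_CC[OF mC(1) vC] mC vC by simp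
      ultimately have "mC = u \<or> mC = v" using btw[of mC] mC(1) by blast
      then have "v = mC" using uA mC(1) disj by blast
      then show ?thesis using ua by blast
    qed
  next
    case uA: False
    then have uC: "u \<in> C" using u by blast
    show ?thesis
    proof (cases "v \<in> C")
      case vC: True
      have "covers C leC u v"
        unfolding covers_def
      proof (intro conjI)
        show "leC u v" using Ruv R_CC uC vC by simp
        show "\<not> (\<exists>c\<in>C. leC u c \<and> leC c v \<and> c \<noteq> u \<and> c \<noteq> v)"
          using btw R_CC uC vC by blast
      qed (use uC vC uv in auto)
      then show ?thesis by blast
    next
      case vC: False
      then have vA: "v \<in> A" using v by blast
      have "le b v" using Ruv R_CA uC vA by simp
      moreover have "R u b" using R_CA[OF uC bA] po_refl[OF po bA] by simp
      ultimately have "b = u \<or> b = v" using btw[of b] bA R_AA vA by blast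
      then have vb: "v = b" using bC uC by blast
      have "R MC v" using R_CA[OF MC(1) vA] vb po_refl[OF po bA] by simp
      moreover have "R u MC" using R_CC[OF uC MC(1)] MC uC by simp
      ultimately have "MC = u \<or> MC = v" using btw[of MC] MC(1) by blast
      then have "u = MC" using vA MC(1) disj by blast
      then show ?thesis using vb by blast
    qed
  qed
next
  assume h: "covers A le u v \<or> covers C leC u v \<or> (u = a \<and> v = mC) \<or> (u = MC \<and> v = b)"
  then show "covers (A \<union> C) R u v"
  proof (elim disjE conjE)
    assume cv: "covers A le u v"
    have u: "u \<in> A" and v: "v \<in> A" and luv: "le u v" and uv: "u \<noteq> v"
      using cv covers_mem covers_le by metis+
    have nob: "\<And>c. c \<in> A \<Longrightarrow> le u c \<Longrightarrow> le c v \<Longrightarrow> c = u \<or> c = v"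
      using cv covers_between by metis
    show ?thesis unfolding covers_def
    proof (intro conjI)
      show "R u v" using R_AA u v luv by simp
      show "\<not> (\<exists>c\<in>A \<union> C. R u c \<and> R c v \<and> c \<noteq> u \<and> c \<noteq> v)"
      proof
        assume "\<exists>c\<in>A \<union> C. R u c \<and> R c v \<and> c \<noteq> u \<and> c \<noteq> v"
        then obtain c where c: "c \<in> A \<union> C" "R u c" "R c v" "c \<noteq> u" "c \<noteq> v" by blast
        show False
        proof (cases "c \<in> A")
          case True then show False using c nob R_AA u v by blast
        next
          case False
          then have cC: "c \<in> C" using c by blast
          have ua: "le u a" using c R_AC u cC by simp
          have bv: "le b v" using c R_CA v cC by simp
          have av: "le a v" using po_trans[OF po aA bA v ab bv] .
          have ub: "le u b" using po_trans[OF po u aA bA ua ab] .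
          have 1: "a = u \<or> a = v" using nob[OF aA ua av] .
          have 2: "b = u \<or> b = v" using nob[OF bA ub bv] .
          show False
          proof (cases "a = u")
            case True
            then have "b = v" using 2 anb by blast
            then show False using nc cv True by simp
          next
            case False
            then have "a = v" using 1 by blast
            then have "le b a" using bv by simp
            then show False using po_anti[OF po aA bA ab] anb by blast
          qed
        qed
      qed
    qed (use u v uv in auto)
  next
    assume cv: "covers C leC u v"
    have u: "u \<in> C" and v: "v \<in> C" and luv: "leC u v" and uv: "u \<noteq> v"
      using cv covers_mem covers_le by metis+
    have nob: "\<And>c. c \<in> C \<Longrightarrow> leC u c \<Longrightarrow> leC c v \<Longrightarrow> c = u \<or> c = v"
      using cv covers_between by metis
    show ?thesis unfolding covers_def
    proof (intro conjI)
      show "R u v" using R_CC u v luv by simp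
      show "\<not> (\<exists>c\<in>A \<union> C. R u c \<and> R c v \<and> c \<noteq> u \<and> c \<noteq> v)"
      proof
        assume "\<exists>c\<in>A \<union> C. R u c \<and> R c v \<and> c \<noteq> u \<and> c \<noteq> v"
        then obtain c where c: "c \<in> A \<union> C" "R u c" "R c v" "c \<noteq> u" "c \<noteq> v" by blast
        show False
        proof (cases "c \<in> C")
          case True then show False using c nob R_CC u v by blast
        next
          case False
          then have cA: "c \<in> A" using c by blast
          have "le b c" using c R_CA u cA by simp
          moreover have "le c a" using c R_AC v cA by simp
          ultimately have "le b a" using po_trans[OF po bA cA aA] by blast
          then show False using po_anti[OF po aA bA ab] anb by blast
        qed
      qed
    qed (use u v uv in auto)
  next
    assume ua: "u = a" and vm: "v = mC"
    show ?thesis unfolding covers_def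
    proof (intro conjI)
      show "R u v" using R_AC[OF aA mC(1)] ua vm po_refl[OF po aA] by simp
      show "\<not> (\<exists>c\<in>A \<union> C. R u c \<and> R c v \<and> c \<noteq> u \<and> c \<noteq> v)"
      proof
        assume "\<exists>c\<in>A \<union> C. R u c \<and> R c v \<and> c \<noteq> u \<and> c \<noteq> v"
        then obtain c where c: "c \<in> A \<union> C" "R u c" "R c v" "c \<noteq> u" "c \<noteq> v" by blast
        show False
        proof (cases "c \<in> A")
          case True
          have "le a c" using c R_AA True aA ua by simp
          moreover have "le c a" using c R_AC True mC(1) vm by simp
          ultimately show False using po_anti[OF po aA True] c ua by blast
        next
          case False
          then have cC: "c \<in> C" using c by blast
          have "leC c mC" using c R_CC cC mC(1) vm by simp
          then show False using po_anti[OF poC cC mC(1)] mC c vm cC by blast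
        qed
      qed
    qed (use ua vm aA mC aC in auto)
  next
    assume uM: "u = MC" and vb: "v = b"
    show ?thesis unfolding covers_def
    proof (intro conjI)
      show "R u v" using R_CA[OF MC(1) bA] uM vb po_refl[OF po bA] by simp
      show "\<not> (\<exists>c\<in>A \<union> C. R u c \<and> R c v \<and> c \<noteq> u \<and> c \<noteq> v)"
      proof
        assume "\<exists>c\<in>A \<union> C. R u c \<and> R c v \<and> c \<noteq> u \<and> c \<noteq> v"
        then obtain c where c: "c \<in> A \<union> C" "R u c" "R c v" "c \<noteq> u" "c \<noteq> v" by blast
        show False
        proof (cases "c \<in> A")
          case True
          have "le c b" using c R_AA True bA vb by simp
          moreover have "le b c" using c R_CA True MC(1) uM by simp
          ultimately show False using po_anti[OF po bA True] c vb by blast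
        next
          case False
          then have cC: "c \<in> C" using c by blast
          have "leC MC c" using c R_CC cC MC(1) uM by simp
          then show False using po_anti[OF poC cC MC(1)] MC c uM cC by blast
        qed
      qed
    qed (use uM vb bA MC bC in auto)
  qed
qed

end




lemma cover_edges_sub: "cover_edges A le \<subseteq> Pow A"
  unfolding cover_edges_def using covers_mem by fastforce

lemma cover_edges_fin: "finite A \<Longrightarrow> finite (cover_edges A le)"
  using cover_edges_sub by (meson finite_Pow_iff finite_subset)

context adjset begin

lemma edges_eq:
  assumes mC: "mC \<in> C" "\<forall>w\<in>C. leC mC w" and MC: "MC \<in> C" "\<forall>w\<in>C. leC w MC"
  shows "cover_edges (A \<union> C) R = cover_edges A le \<union> cover_edges C leC \<union> {{a, mC}, {MC, b}}"
  unfolding cover_edges_def covers_iff[OF mC MC] by blast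

lemma edges_card:
  assumes finA: "finite A"
  shows "card (cover_edges (A \<union> C) R) = card (cover_edges A le) + card (cover_edges C leC) + 2"
proof -
  obtain mC where mC: "mC \<in> C" "\<forall>w\<in>C. leC mC w" using chain_least[OF ch] by blast
  obtain MC where MC: "MC \<in> C" "\<forall>w\<in>C. leC w MC" using chain_greatest[OF ch] by blast
  have finC: "finite C" using ch by (simp add: is_chain_def)
  have f1: "finite (cover_edges A le)" "finite (cover_edges C leC)"
    using cover_edges_fin finA finC by blast+
  have d1: "cover_edges A le \<inter> cover_edges C leC = {}"
    using cover_edges_sub[of A le] cover_edges_sub[of C leC] disj covers_mem
    unfolding cover_edges_def by blast
  have nA: "{a, mC} \<notin> Pow A" "{MC, b} \<notin> Pow A" using mC MC disj by blast+
  have nC: "{a, mC} \<notin> Pow C" "{MC, b} \<notin> Pow C" using aC bC by blast+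
  have d2: "(cover_edges A le \<union> cover_edges C leC) \<inter> {{a, mC}, {MC, b}} = {}"
    using nA nC cover_edges_sub[of A le] cover_edges_sub[of C leC] by blast
  have ne: "{a, mC} \<noteq> {MC, b}" using aC MC(1) anb by (auto simp: doubleton_eq_iff)
  have "card (cover_edges (A \<union> C) R) =
      card (cover_edges A le \<union> cover_edges C leC) + card {{a, mC}, {MC, b}}"
    unfolding edges_eq[OF mC MC] using f1 d2 by (intro card_Un_disjoint) auto
  also have "card (cover_edges A le \<union> cover_edges C leC) = card (cover_edges A le) + card (cover_edges C leC)"
    using f1 d1 by (intro card_Un_disjoint) auto
  also have "card {{a, mC}, {MC, b}} = 2" using ne by simp
  finally show ?thesis .
qed

end

lemma adj_edges:
  "adj_chains S R k \<Longrightarrow> int (card (cover_edges S R)) = int (card S) - 1 + int k"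
proof (induction rule: adj_chains.induct)
  case (base C le)
  have "card C \<ge> 1" using base by (auto simp: is_chain_def Suc_le_eq card_gt_0_iff)
  then show ?case using chain_edges[OF base] by simp
next
  case (step A le k C leC a b)
  have poA: "partial_order_on' A le" and finA: "finite A"
    using adj_chains_po[OF step.hyps(1)] by blast+
  interpret adjset A le C leC a b using step poA by unfold_locales auto
  have finC: "finite C" and neC: "card C \<ge> 1"
    using step.hyps(2) by (auto simp: is_chain_def Suc_le_eq card_gt_0_iff)
  have "card (A \<union> C) = card A + card C" using finA finC step.hyps(3) by (rule card_Un_disjoint)
  then show ?case using edges_card[OF finA] step.IH chain_edges[OF step.hyps(2)] neC by simp
qed




definition agree :: "'a set \<Rightarrow> ('a \<Rightarrow> 'a \<Rightarrow> bool) \<Rightarrow> ('a \<Rightarrow> 'a \<Rightarrow> bool) \<Rightarrow> bool" where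
  "agree S R1 R2 \<longleftrightarrow> (\<forall>u\<in>S. \<forall>v\<in>S. R1 u v = R2 u v)"

definition ext :: "'a set \<Rightarrow> ('a \<Rightarrow> 'a \<Rightarrow> bool) \<Rightarrow> 'a \<Rightarrow> 'a set \<Rightarrow> 'a set \<Rightarrow> ('a \<Rightarrow> 'a \<Rightarrow> bool)" where
  "ext S R x D U = (\<lambda>u v. (u \<in> S \<and> v \<in> S \<and> R u v) \<or> (u = x \<and> v = x) \<or>
      (u \<in> S \<and> v = x \<and> u \<in> D) \<or> (u = x \<and> v \<in> S \<and> v \<in> U))"

lemma chain_ins:
  assumes ch: "is_chain C le" and x: "x \<notin> C" and DU: "D \<union> U = C" "D \<inter> U = {}"
    and DleU: "\<forall>u\<in>D. \<forall>v\<in>U. le u v"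
  shows "is_chain (insert x C) (ext C le x D U)"
proof -
  have po: "partial_order_on' C le" and fin: "finite C" and tot: "\<forall>u\<in>C. \<forall>v\<in>C. le u v \<or> le v u"
    using ch by (auto simp: is_chain_def)
  have tr: "\<And>u v w. u \<in> C \<Longrightarrow> v \<in> C \<Longrightarrow> w \<in> C \<Longrightarrow> le u v \<Longrightarrow> le v w \<Longrightarrow> le u w"
    using po_trans[OF po] by blast
  have an: "\<And>u v. u \<in> C \<Longrightarrow> v \<in> C \<Longrightarrow> le u v \<Longrightarrow> le v u \<Longrightarrow> u = v"
    using po_anti[OF po] by blast
  have rf: "\<And>u. u \<in> C \<Longrightarrow> le u u" using po_refl[OF po] by blast
  have Dd: "\<And>u w. u \<in> D \<Longrightarrow> w \<in> C \<Longrightarrow> le w u \<Longrightarrow> w \<in> D"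
  proof -
    fix u w assume u: "u \<in> D" and w: "w \<in> C" and wu: "le w u"
    show "w \<in> D"
    proof (rule ccontr)
      assume "w \<notin> D" then have "w \<in> U" using DU w by blast
      then have "le u w" using DleU u by blast
      then have "u = w" using an u w wu DU by blast
      then show False using \<open>w \<notin> D\<close> u by blast
    qed
  qed
  have Uu: "\<And>u w. u \<in> U \<Longrightarrow> w \<in> C \<Longrightarrow> le u w \<Longrightarrow> w \<in> U"
  proof -
    fix u w assume u: "u \<in> U" and w: "w \<in> C" and wu: "le u w"
    show "w \<in> U"
    proof (rule ccontr)
      assume "w \<notin> U" then have "w \<in> D" using DU w by blast
      then have "le w u" using DleU u by blast
      then have "u = w" using an u w wu DU by blast
      then show False using \<open>w \<notin> U\<close> u by blast
    qed
  qed
  show ?thesis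
    unfolding is_chain_def partial_order_on'_def ext_def
  proof (intro conjI)
    show "finite (insert x C)" using fin by simp
    show "insert x C \<noteq> {}" by simp
    show "\<forall>u\<in>insert x C. (u \<in> C \<and> u \<in> C \<and> le u u) \<or> (u = x \<and> u = x) \<or> (u \<in> C \<and> u = x \<and> u \<in> D) \<or> (u = x \<and> u \<in> C \<and> u \<in> U)"
      using rf by blast
    show "\<forall>u\<in>insert x C. \<forall>v\<in>insert x C. (u \<in> C \<and> v \<in> C \<and> le u v \<or> u = x \<and> v = x \<or> u \<in> C \<and> v = x \<and> u \<in> D \<or> u = x \<and> v \<in> C \<and> v \<in> U) \<or>
        (v \<in> C \<and> u \<in> C \<and> le v u \<or> v = x \<and> u = x \<or> v \<in> C \<and> u = x \<and> v \<in> D \<or> v = x \<and> u \<in> C \<and> u \<in> U)"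
      using tot DU by blast
    show "\<forall>u\<in>insert x C. \<forall>v\<in>insert x C.
       (u \<in> C \<and> v \<in> C \<and> le u v \<or> u = x \<and> v = x \<or> u \<in> C \<and> v = x \<and> u \<in> D \<or> u = x \<and> v \<in> C \<and> v \<in> U) \<and>
       (v \<in> C \<and> u \<in> C \<and> le v u \<or> v = x \<and> u = x \<or> v \<in> C \<and> u = x \<and> v \<in> D \<or> v = x \<and> u \<in> C \<and> u \<in> U) \<longrightarrow>
       u = v"
      using an x DU by blast
    show "\<forall>u\<in>insert x C. \<forall>v\<in>insert x C. \<forall>w\<in>insert x C.
       (u \<in> C \<and> v \<in> C \<and> le u v \<or> u = x \<and> v = x \<or> u \<in> C \<and> v = x \<and> u \<in> D \<or> u = x \<and> v \<in> C \<and> v \<in> U) \<and>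
       (v \<in> C \<and> w \<in> C \<and> le v w \<or> v = x \<and> w = x \<or> v \<in> C \<and> w = x \<and> v \<in> D \<or> v = x \<and> w \<in> C \<and> w \<in> U) \<longrightarrow>
       (u \<in> C \<and> w \<in> C \<and> le u w \<or> u = x \<and> w = x \<or> u \<in> C \<and> w = x \<and> u \<in> D \<or> u = x \<and> w \<in> C \<and> w \<in> U)"
    proof (intro ballI impI)
      fix u v w assume u: "u \<in> insert x C" and v: "v \<in> insert x C" and w: "w \<in> insert x C"
      assume h: "(u \<in> C \<and> v \<in> C \<and> le u v \<or> u = x \<and> v = x \<or> u \<in> C \<and> v = x \<and> u \<in> D \<or> u = x \<and> v \<in> C \<and> v \<in> U) \<and>
       (v \<in> C \<and> w \<in> C \<and> le v w \<or> v = x \<and> w = x \<or> v \<in> C \<and> w = x \<and> v \<in> D \<or> v = x \<and> w \<in> C \<and> w \<in> U)"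
      show "u \<in> C \<and> w \<in> C \<and> le u w \<or> u = x \<and> w = x \<or> u \<in> C \<and> w = x \<and> u \<in> D \<or> u = x \<and> w \<in> C \<and> w \<in> U"
      proof (cases "v = x")
        case True
        then have "(u = x \<or> (u \<in> C \<and> u \<in> D)) \<and> (w = x \<or> (w \<in> C \<and> w \<in> U))" using h x by blast
        then show ?thesis using DleU by blast
      next
        case False
        then have vC: "v \<in> C" using v by blast
        show ?thesis
        proof (cases "u = x")
          case ux: True
          then have vU: "v \<in> U" using h False x by blast
          show ?thesis
          proof (cases "w = x")
            case True then show ?thesis using ux by blast
          next
            case False
            then have "w \<in> C" "le v w" using h vC x w \<open>v \<noteq> x\<close> by blast+
            then show ?thesis using Uu[OF vU] ux by blast
          qed
        next
          case ux: False
          then have uC: "u \<in> C" and uv: "le u v" using h u vC x by blast+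
          show ?thesis
          proof (cases "w = x")
            case True
            then have vD: "v \<in> D" using h vC x \<open>v \<noteq> x\<close> by blast
            then show ?thesis using Dd[OF vD uC uv] uC True by blast
          next
            case False
            then have "w \<in> C" "le v w" using h vC x w \<open>v \<noteq> x\<close> by blast+
            then show ?thesis using tr[OF uC vC] uv uC by blast
          qed
        qed
      qed
    qed
  qed
qed




lemma agree_lift:
  assumes disj: "A \<inter> C = {}" and xA: "x \<notin> A" and xC: "x \<notin> C" and aA: "a \<in> A" and bA: "b \<in> A"
    and ag: "agree (insert x A) R0 (ext A le x D0 U0)"
    and c1: "\<forall>u\<in>A. u \<in> D \<longleftrightarrow> u \<in> D0" and c2: "\<forall>v\<in>A. v \<in> U \<longleftrightarrow> v \<in> U0"
    and c3: "\<forall>v\<in>C. v \<in> U \<longleftrightarrow> a \<in> U0" and c4: "\<forall>u\<in>C. u \<in> D \<longleftrightarrow> b \<in> D0"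
  shows "agree (insert x (A \<union> C)) (adjunct_rel (insert x A) R0 C leC a b)
           (ext (A \<union> C) (adjunct_rel A le C leC a b) x D U)"
  unfolding agree_def
proof (intro ballI)
  fix u v assume u: "u \<in> insert x (A \<union> C)" and v: "v \<in> insert x (A \<union> C)"
  have ag': "\<And>u v. u \<in> insert x A \<Longrightarrow> v \<in> insert x A \<Longrightarrow> R0 u v = ext A le x D0 U0 u v"
    using ag unfolding agree_def by blast
  have xx: "R0 x x" using ag'[of x x] unfolding ext_def by simp
  have AA: "\<And>u v. u \<in> A \<Longrightarrow> v \<in> A \<Longrightarrow> R0 u v = le u v"
    using ag' xA unfolding ext_def by auto
  have Ax: "\<And>u. u \<in> A \<Longrightarrow> R0 u x = (u \<in> D0)"
    using ag' xA unfolding ext_def by auto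
  have xA': "\<And>v. v \<in> A \<Longrightarrow> R0 x v = (v \<in> U0)"
    using ag' xA unfolding ext_def by auto
  have R_AA: "\<And>u v. u \<in> A \<Longrightarrow> v \<in> A \<Longrightarrow> adjunct_rel A le C leC a b u v = le u v"
    using disj unfolding adjunct_rel_def by blast
  have R_CC: "\<And>u v. u \<in> C \<Longrightarrow> v \<in> C \<Longrightarrow> adjunct_rel A le C leC a b u v = leC u v"
    using disj unfolding adjunct_rel_def by blast
  have R_AC: "\<And>u v. u \<in> A \<Longrightarrow> v \<in> C \<Longrightarrow> adjunct_rel A le C leC a b u v = le u a"
    using disj unfolding adjunct_rel_def by blast
  have R_CA: "\<And>u v. u \<in> C \<Longrightarrow> v \<in> A \<Longrightarrow> adjunct_rel A le C leC a b u v = le b v"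
    using disj unfolding adjunct_rel_def by blast
  have disj': "insert x A \<inter> C = {}" using disj xC by blast
  have S_AA: "\<And>u v. u \<in> insert x A \<Longrightarrow> v \<in> insert x A \<Longrightarrow> adjunct_rel (insert x A) R0 C leC a b u v = R0 u v"
    using disj' unfolding adjunct_rel_def by blast
  have S_CC: "\<And>u v. u \<in> C \<Longrightarrow> v \<in> C \<Longrightarrow> adjunct_rel (insert x A) R0 C leC a b u v = leC u v"
    using disj' unfolding adjunct_rel_def by blast
  have S_AC: "\<And>u v. u \<in> insert x A \<Longrightarrow> v \<in> C \<Longrightarrow> adjunct_rel (insert x A) R0 C leC a b u v = R0 u a"
    using disj' unfolding adjunct_rel_def by blast
  have S_CA: "\<And>u v. u \<in> C \<Longrightarrow> v \<in> insert x A \<Longrightarrow> adjunct_rel (insert x A) R0 C leC a b u v = R0 b v"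
    using disj' unfolding adjunct_rel_def by blast
  have E_in: "\<And>u v. u \<in> A \<union> C \<Longrightarrow> v \<in> A \<union> C \<Longrightarrow> ext (A \<union> C) (adjunct_rel A le C leC a b) x D U u v = adjunct_rel A le C leC a b u v"
    using xA xC unfolding ext_def by auto
  have E_x1: "\<And>u. u \<in> A \<union> C \<Longrightarrow> ext (A \<union> C) (adjunct_rel A le C leC a b) x D U u x = (u \<in> D)"
    using xA xC unfolding ext_def by auto
  have E_x2: "\<And>v. v \<in> A \<union> C \<Longrightarrow> ext (A \<union> C) (adjunct_rel A le C leC a b) x D U x v = (v \<in> U)"
    using xA xC unfolding ext_def by auto
  have E_xx: "ext (A \<union> C) (adjunct_rel A le C leC a b) x D U x x" unfolding ext_def by simp
  have uc: "u = x \<or> u \<in> A \<or> u \<in> C" and vc: "v = x \<or> v \<in> A \<or> v \<in> C" using u v by blast+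
  show "adjunct_rel (insert x A) R0 C leC a b u v = ext (A \<union> C) (adjunct_rel A le C leC a b) x D U u v"
    using uc vc
  proof (elim disjE)
    assume "u = x" "v = x" then show ?thesis using S_AA E_xx xx by simp
  next
    assume h: "u = x" "v \<in> A" then show ?thesis using S_AA[of x v] E_x2[of v] xA'[of v] c2 by simp
  next
    assume h: "u = x" "v \<in> C" then show ?thesis using S_AC[of x v] E_x2[of v] xA'[OF aA] c3 by simp
  next
    assume h: "u \<in> A" "v = x" then show ?thesis using S_AA[of u x] E_x1[of u] Ax[of u] c1 by simp
  next
    assume h: "u \<in> A" "v \<in> A" then show ?thesis using S_AA[of u v] E_in[of u v] AA R_AA by simp
  next
    assume h: "u \<in> A" "v \<in> C" then show ?thesis using S_AC[of u v] E_in[of u v] AA[OF _ aA] R_AC by simp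
  next
    assume h: "u \<in> C" "v = x" then show ?thesis using S_CA[of u x] E_x1[of u] Ax[OF bA] c4 by simp
  next
    assume h: "u \<in> C" "v \<in> A" then show ?thesis using S_CA[of u v] E_in[of u v] AA[OF bA] R_CA by simp
  next
    assume h: "u \<in> C" "v \<in> C" then show ?thesis using S_CC[of u v] E_in[of u v] R_CC by simp
  qed
qed


lemma agree_chain:
  assumes disj: "A \<inter> C = {}" and xA: "x \<notin> A" and xC: "x \<notin> C" and aA: "a \<in> A" and bA: "b \<in> A"
    and c1: "\<forall>u\<in>A. u \<in> D \<longleftrightarrow> le u a" and c2: "\<forall>v\<in>A. v \<in> U \<longleftrightarrow> le b v"
    and c3: "\<forall>u\<in>C. u \<in> D \<longleftrightarrow> u \<in> D1" and c4: "\<forall>v\<in>C. v \<in> U \<longleftrightarrow> v \<in> U1"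
  shows "agree (insert x (A \<union> C)) (adjunct_rel A le (insert x C) (ext C leC x D1 U1) a b)
           (ext (A \<union> C) (adjunct_rel A le C leC a b) x D U)"
  unfolding agree_def
proof (intro ballI)
  fix u v assume u: "u \<in> insert x (A \<union> C)" and v: "v \<in> insert x (A \<union> C)"
  let ?L = "ext C leC x D1 U1"
  have xx: "?L x x" unfolding ext_def by simp
  have CC: "\<And>u v. u \<in> C \<Longrightarrow> v \<in> C \<Longrightarrow> ?L u v = leC u v"
    using xC unfolding ext_def by auto
  have Cx: "\<And>u. u \<in> C \<Longrightarrow> ?L u x = (u \<in> D1)"
    using xC unfolding ext_def by auto
  have xC': "\<And>v. v \<in> C \<Longrightarrow> ?L x v = (v \<in> U1)"
    using xC unfolding ext_def by auto
  have R_AA: "\<And>u v. u \<in> A \<Longrightarrow> v \<in> A \<Longrightarrow> adjunct_rel A le C leC a b u v = le u v"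
    using disj unfolding adjunct_rel_def by blast
  have R_CC: "\<And>u v. u \<in> C \<Longrightarrow> v \<in> C \<Longrightarrow> adjunct_rel A le C leC a b u v = leC u v"
    using disj unfolding adjunct_rel_def by blast
  have R_AC: "\<And>u v. u \<in> A \<Longrightarrow> v \<in> C \<Longrightarrow> adjunct_rel A le C leC a b u v = le u a"
    using disj unfolding adjunct_rel_def by blast
  have R_CA: "\<And>u v. u \<in> C \<Longrightarrow> v \<in> A \<Longrightarrow> adjunct_rel A le C leC a b u v = le b v"
    using disj unfolding adjunct_rel_def by blast
  have disj': "A \<inter> insert x C = {}" using disj xA by blast
  have S_AA: "\<And>u v. u \<in> A \<Longrightarrow> v \<in> A \<Longrightarrow> adjunct_rel A le (insert x C) ?L a b u v = le u v"
    using disj' unfolding adjunct_rel_def by blast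
  have S_CC: "\<And>u v. u \<in> insert x C \<Longrightarrow> v \<in> insert x C \<Longrightarrow> adjunct_rel A le (insert x C) ?L a b u v = ?L u v"
    using disj' unfolding adjunct_rel_def by blast
  have S_AC: "\<And>u v. u \<in> A \<Longrightarrow> v \<in> insert x C \<Longrightarrow> adjunct_rel A le (insert x C) ?L a b u v = le u a"
    using disj' unfolding adjunct_rel_def by blast
  have S_CA: "\<And>u v. u \<in> insert x C \<Longrightarrow> v \<in> A \<Longrightarrow> adjunct_rel A le (insert x C) ?L a b u v = le b v"
    using disj' unfolding adjunct_rel_def by blast
  have E_in: "\<And>u v. u \<in> A \<union> C \<Longrightarrow> v \<in> A \<union> C \<Longrightarrow> ext (A \<union> C) (adjunct_rel A le C leC a b) x D U u v = adjunct_rel A le C leC a b u v"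
    using xA xC unfolding ext_def by auto
  have E_x1: "\<And>u. u \<in> A \<union> C \<Longrightarrow> ext (A \<union> C) (adjunct_rel A le C leC a b) x D U u x = (u \<in> D)"
    using xA xC unfolding ext_def by auto
  have E_x2: "\<And>v. v \<in> A \<union> C \<Longrightarrow> ext (A \<union> C) (adjunct_rel A le C leC a b) x D U x v = (v \<in> U)"
    using xA xC unfolding ext_def by auto
  have E_xx: "ext (A \<union> C) (adjunct_rel A le C leC a b) x D U x x" unfolding ext_def by simp
  have uc: "u = x \<or> u \<in> A \<or> u \<in> C" and vc: "v = x \<or> v \<in> A \<or> v \<in> C" using u v by blast+
  show "adjunct_rel A le (insert x C) ?L a b u v = ext (A \<union> C) (adjunct_rel A le C leC a b) x D U u v"
    using uc vc
  proof (elim disjE)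
    assume "u = x" "v = x" then show ?thesis using S_CC E_xx xx by simp
  next
    assume h: "u = x" "v \<in> A" then show ?thesis using S_CA[of x v] E_x2[of v] c2 by simp
  next
    assume h: "u = x" "v \<in> C" then show ?thesis using S_CC[of x v] E_x2[of v] xC'[of v] c4 by simp
  next
    assume h: "u \<in> A" "v = x" then show ?thesis using S_AC[of u x] E_x1[of u] c1 by simp
  next
    assume h: "u \<in> A" "v \<in> A" then show ?thesis using S_AA[of u v] E_in[of u v] R_AA by simp
  next
    assume h: "u \<in> A" "v \<in> C" then show ?thesis using S_AC[of u v] E_in[of u v] R_AC by simp
  next
    assume h: "u \<in> C" "v = x" then show ?thesis using S_CC[of u x] E_x1[of u] Cx[of u] c3 by simp
  next
    assume h: "u \<in> C" "v \<in> A" then show ?thesis using S_CA[of u v] E_in[of u v] R_CA by simp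
  next
    assume h: "u \<in> C" "v \<in> C" then show ?thesis using S_CC[of u v] E_in[of u v] R_CC CC by simp
  qed
qed




lemma agree_refl: "agree S R R" by (simp add: agree_def)

lemma noncover_lift:
  assumes nc: "\<not> covers A le a b" and a: "a \<in> A" and b: "b \<in> A" and ab: "le a b" "a \<noteq> b"
    and ag: "agree (insert x A) R0 (ext A le x D0 U0)" and xA: "x \<notin> A"
  shows "\<not> covers (insert x A) R0 a b \<and> R0 a b"
proof -
  have AA: "\<And>u v. u \<in> A \<Longrightarrow> v \<in> A \<Longrightarrow> R0 u v = le u v"
    using ag xA unfolding agree_def ext_def by auto
  obtain c where c: "c \<in> A" "le a c" "le c b" "c \<noteq> a" "c \<noteq> b"
    using nc a b ab unfolding covers_def by blast
  have "R0 a c" "R0 c b" using AA c a b by simp_all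
  then have "\<not> covers (insert x A) R0 a b" using c covers_between[of "insert x A" R0 a b c] by blast
  moreover have "R0 a b" using AA a b ab by simp
  ultimately show ?thesis by blast
qed

lemma adj_step_info:
  assumes "adj_chains A le k" "is_chain C leC" "A \<inter> C = {}" "a \<in> A" "b \<in> A" "le a b" "a \<noteq> b" "\<not> covers A le a b"
  shows "adjset A le C leC a b"
  using assms adj_chains_po[OF assms(1)] by unfold_locales auto

lemma ins_top:
  "adj_chains S R k \<Longrightarrow> x \<notin> S \<Longrightarrow> \<exists>R'. adj_chains (insert x S) R' k \<and> agree (insert x S) R' (ext S R x S {})"
proof (induction arbitrary: x rule: adj_chains.induct)
  case (base C le)
  have "is_chain (insert x C) (ext C le x C {})"
    using chain_ins[OF base.hyps base.prems] by auto
  then show ?case using adj_chains.base agree_refl by blast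
next
  case (step A le k C leC a b)
  have xA: "x \<notin> A" and xC: "x \<notin> C" using step.prems by auto
  obtain R0 where R0: "adj_chains (insert x A) R0 k" "agree (insert x A) R0 (ext A le x A {})"
    using step.IH[OF xA] by blast
  have nc: "\<not> covers (insert x A) R0 a b" "R0 a b"
    using noncover_lift[OF step.hyps(8,4,5,6,7) R0(2) xA] by blast+
  have d: "insert x A \<inter> C = {}" using step.hyps(3) xC by blast
  have "adj_chains (insert x A \<union> C) (adjunct_rel (insert x A) R0 C leC a b) (Suc k)"
    using adj_chains.step[OF R0(1) step.hyps(2) d] step.hyps(4,5,7) nc by blast
  moreover have "insert x A \<union> C = insert x (A \<union> C)" by blast
  moreover have "agree (insert x (A \<union> C)) (adjunct_rel (insert x A) R0 C leC a b)
           (ext (A \<union> C) (adjunct_rel A le C leC a b) x (A \<union> C) {})"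
    by (rule agree_lift[OF step.hyps(3) xA xC step.hyps(4,5) R0(2)]) (use step.hyps(5) in auto)
  ultimately show ?case by metis
qed

lemma ins_bot:
  "adj_chains S R k \<Longrightarrow> x \<notin> S \<Longrightarrow> \<exists>R'. adj_chains (insert x S) R' k \<and> agree (insert x S) R' (ext S R x {} S)"
proof (induction arbitrary: x rule: adj_chains.induct)
  case (base C le)
  have "is_chain (insert x C) (ext C le x {} C)"
    using chain_ins[OF base.hyps base.prems] by auto
  then show ?case using adj_chains.base agree_refl by blast
next
  case (step A le k C leC a b)
  have xA: "x \<notin> A" and xC: "x \<notin> C" using step.prems by auto
  obtain R0 where R0: "adj_chains (insert x A) R0 k" "agree (insert x A) R0 (ext A le x {} A)"
    using step.IH[OF xA] by blast
  have nc: "\<not> covers (insert x A) R0 a b" "R0 a b"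
    using noncover_lift[OF step.hyps(8,4,5,6,7) R0(2) xA] by blast+
  have d: "insert x A \<inter> C = {}" using step.hyps(3) xC by blast
  have "adj_chains (insert x A \<union> C) (adjunct_rel (insert x A) R0 C leC a b) (Suc k)"
    using adj_chains.step[OF R0(1) step.hyps(2) d] step.hyps(4,5,7) nc by blast
  moreover have "insert x A \<union> C = insert x (A \<union> C)" by blast
  moreover have "agree (insert x (A \<union> C)) (adjunct_rel (insert x A) R0 C leC a b)
           (ext (A \<union> C) (adjunct_rel A le C leC a b) x {} (A \<union> C))"
    by (rule agree_lift[OF step.hyps(3) xA xC step.hyps(4,5) R0(2)]) (use step.hyps(4) in auto)
  ultimately show ?case by metis
qed




lemma chain_ins_edge:
  assumes ch: "is_chain C le" and x: "x \<notin> C" and cv: "covers C le p q"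
  shows "is_chain (insert x C) (ext C le x {u\<in>C. le u p} {v\<in>C. le q v})"
proof -
  have po: "partial_order_on' C le" and tot: "\<forall>u\<in>C. \<forall>v\<in>C. le u v \<or> le v u"
    using ch by (auto simp: is_chain_def)
  have p: "p \<in> C" and q: "q \<in> C" and pq: "le p q" "p \<noteq> q" using cv covers_mem covers_le by metis+
  have 1: "{u\<in>C. le u p} \<union> {v\<in>C. le q v} = C"
  proof (intro equalityI subsetI)
    fix u assume u: "u \<in> C"
    show "u \<in> {u\<in>C. le u p} \<union> {v\<in>C. le q v}"
    proof (cases "le u p")
      case True then show ?thesis using u by blast
    next
      case False
      then have pu: "le p u" using tot u p by blast
      have "le u q \<or> le q u" using tot u q by blast
      then have "le q u"
      proof
        assume "le u q"
        then have "u = p \<or> u = q" using covers_between[OF cv u pu] by blast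
        then show "le q u" using False po_refl[OF po] u by blast
      qed
      then show ?thesis using u by blast
    qed
  qed blast
  have 2: "{u\<in>C. le u p} \<inter> {v\<in>C. le q v} = {}"
  proof (rule ccontr)
    assume "{u\<in>C. le u p} \<inter> {v\<in>C. le q v} \<noteq> {}"
    then obtain u where "u \<in> C" "le u p" "le q u" by blast
    then have "le q p" using po_trans[OF po q _ p] by blast
    then show False using po_anti[OF po p q] pq by blast
  qed
  have 3: "\<forall>u\<in>{u\<in>C. le u p}. \<forall>v\<in>{v\<in>C. le q v}. le u v"
  proof (intro ballI)
    fix u v assume "u \<in> {u\<in>C. le u p}" "v \<in> {v\<in>C. le q v}"
    then have "u \<in> C" "le u p" "v \<in> C" "le q v" by blast+
    then show "le u v" using po_trans[OF po] p q pq(1) by metis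
  qed
  show ?thesis using chain_ins[OF ch x 1 2 3] .
qed

lemma agree_ext_restrict:
  "agree (insert x S) (ext S R x {u\<in>S. P u} {v\<in>S. Q v}) (ext S R x {u. P u} {v. Q v})"
  unfolding agree_def ext_def by auto

lemma ins_edge:
  "adj_chains S RR k \<Longrightarrow> x \<notin> S \<Longrightarrow> covers S RR p q \<Longrightarrow>
   \<exists>R'. adj_chains (insert x S) R' k \<and> agree (insert x S) R' (ext S RR x {u. RR u p} {v. RR q v})"
proof (induction arbitrary: x p q rule: adj_chains.induct)
  case (base C le)
  have "is_chain (insert x C) (ext C le x {u\<in>C. le u p} {v\<in>C. le q v})"
    using chain_ins_edge[OF base.hyps base.prems] .
  moreover have "agree (insert x C) (ext C le x {u\<in>C. le u p} {v\<in>C. le q v}) (ext C le x {u. le u p} {v. le q v})"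
    using agree_ext_restrict[of x C le "\<lambda>u. le u p" "\<lambda>v. le q v"] by simp
  ultimately show ?case using adj_chains.base by blast
next
  case (step A le k C leC a b)
  have xA: "x \<notin> A" and xC: "x \<notin> C" using step.prems by auto
  interpret adjset A le C leC a b using adj_step_info[OF step.hyps] .
  obtain mC where mC: "mC \<in> C" "\<forall>w\<in>C. leC mC w" using chain_least[OF ch] by blast
  obtain MC where MC: "MC \<in> C" "\<forall>w\<in>C. leC w MC" using chain_greatest[OF ch] by blast
  have eqS: "\<And>Z. Z \<union> C = insert x (A \<union> C) \<longleftrightarrow> Z \<union> C = insert x (A \<union> C)" by simp
  have ba: "\<not> le b a" using po_anti[OF po aA bA ab] anb by blast
  have cases: "covers A le p q \<or> covers C leC p q \<or> (p = a \<and> q = mC) \<or> (p = MC \<and> q = b)"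
    using covers_iff[OF mC MC] step.prems(2) by blast
  show ?case
    using cases
  proof (elim disjE conjE)
    assume cv: "covers A le p q"
    have p: "p \<in> A" and q: "q \<in> A" using cv covers_mem by metis+
    obtain R0 where R0: "adj_chains (insert x A) R0 k"
      "agree (insert x A) R0 (ext A le x {u. le u p} {v. le q v})"
      using step.IH[OF xA cv] by blast
    have nc: "\<not> covers (insert x A) R0 a b" "R0 a b"
      using noncover_lift[OF step.hyps(8,4,5,6,7) R0(2) xA] by blast+
    have d: "insert x A \<inter> C = {}" using step.hyps(3) xC by blast
    have F1: "adj_chains (insert x A \<union> C) (adjunct_rel (insert x A) R0 C leC a b) (Suc k)"
      using adj_chains.step[OF R0(1) step.hyps(2) d] step.hyps(4,5,7) nc by blast
    have e: "insert x A \<union> C = insert x (A \<union> C)" by blast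
    have F3: "agree (insert x (A \<union> C)) (adjunct_rel (insert x A) R0 C leC a b)
           (ext (A \<union> C) R x {u. R u p} {v. R q v})"
      by (rule agree_lift[OF step.hyps(3) xA xC step.hyps(4,5) R0(2)])
        (use p q R_AA R_AC R_CA in auto)
    show ?thesis using F1 F3 unfolding e by blast
  next
    assume cv: "covers C leC p q"
    have p: "p \<in> C" and q: "q \<in> C" using cv covers_mem by metis+
    have chn: "is_chain (insert x C) (ext C leC x {u\<in>C. leC u p} {v\<in>C. leC q v})"
      using chain_ins_edge[OF ch xC cv] .
    have d: "A \<inter> insert x C = {}" using step.hyps(3) xA by blast
    have F1: "adj_chains (A \<union> insert x C) (adjunct_rel A le (insert x C) (ext C leC x {u\<in>C. leC u p} {v\<in>C. leC q v}) a b) (Suc k)"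
      using adj_chains.step[OF step.hyps(1) chn d step.hyps(4-8)] .
    have e: "A \<union> insert x C = insert x (A \<union> C)" by blast
    have F3: "agree (insert x (A \<union> C)) (adjunct_rel A le (insert x C) (ext C leC x {u\<in>C. leC u p} {v\<in>C. leC q v}) a b)
           (ext (A \<union> C) R x {u. R u p} {v. R q v})"
      by (rule agree_chain[OF step.hyps(3) xA xC step.hyps(4,5)])
        (use p q R_CC R_AC R_CA in auto)
    show ?thesis using F1 F3 unfolding e by blast
  next
    assume pa: "p = a" and qm: "q = mC"
    have chn: "is_chain (insert x C) (ext C leC x {} C)"
      using chain_ins[OF ch xC] by auto
    have d: "A \<inter> insert x C = {}" using step.hyps(3) xA by blast
    have F1: "adj_chains (A \<union> insert x C) (adjunct_rel A le (insert x C) (ext C leC x {} C) a b) (Suc k)"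
      using adj_chains.step[OF step.hyps(1) chn d step.hyps(4-8)] .
    have e: "A \<union> insert x C = insert x (A \<union> C)" by blast
    have F3: "agree (insert x (A \<union> C)) (adjunct_rel A le (insert x C) (ext C leC x {} C) a b)
           (ext (A \<union> C) R x {u. R u p} {v. R q v})"
      by (rule agree_chain[OF step.hyps(3) xA xC step.hyps(4,5)])
        (use pa qm mC aA ba R_AA R_CA R_CC in auto)
    show ?thesis using F1 F3 unfolding e by blast
  next
    assume pM: "p = MC" and qb: "q = b"
    have chn: "is_chain (insert x C) (ext C leC x C {})"
      using chain_ins[OF ch xC] by auto
    have d: "A \<inter> insert x C = {}" using step.hyps(3) xA by blast
    have F1: "adj_chains (A \<union> insert x C) (adjunct_rel A le (insert x C) (ext C leC x C {}) a b) (Suc k)"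
      using adj_chains.step[OF step.hyps(1) chn d step.hyps(4-8)] .
    have e: "A \<union> insert x C = insert x (A \<union> C)" by blast
    have F3: "agree (insert x (A \<union> C)) (adjunct_rel A le (insert x C) (ext C leC x C {}) a b)
           (ext (A \<union> C) R x {u. R u p} {v. R q v})"
      by (rule agree_chain[OF step.hyps(3) xA xC step.hyps(4,5)])
        (use pM qb MC bA ba R_AC R_AA R_CC in auto)
    show ?thesis using F1 F3 unfolding e by blast
  qed
qed




lemma covers_cong:
  assumes "\<forall>u\<in>A. \<forall>v\<in>A. le u v \<longleftrightarrow> le' u v"
  shows "covers A le p q \<longleftrightarrow> covers A le' p q"
  using assms unfolding covers_def by (metis (no_types, lifting))

lemma nullity_adj:
  assumes fl: "finite_lattice A le" and ad: "adjunct_of_chains A le r"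
  shows "nullity A le = int r"
proof -
  obtain le' where le': "adj_chains A le' r" "\<forall>x\<in>A. \<forall>y\<in>A. le x y \<longleftrightarrow> le' x y"
    using ad unfolding adjunct_of_chains_def by blast
  have "cover_edges A le = cover_edges A le'"
    unfolding cover_edges_def using covers_cong[OF le'(2)] by simp
  then have "int (card (cover_edges A le)) = int (card A) - 1 + int r"
    using adj_edges[OF le'(1)] by simp
  then show ?thesis using nullity_lattice[OF fl] by simp
qed

lemma lub_unique:
  assumes "partial_order_on' S le" "is_lub S le u v z" "is_lub S le u v z'"
  shows "z = z'"
  using assms po_anti[OF assms(1)] unfolding is_lub_def by blast

lemma glb_unique:
  assumes "partial_order_on' S le" "is_glb S le u v z" "is_glb S le u v z'"
  shows "z = z'"
  using assms po_anti[OF assms(1)] unfolding is_glb_def by blast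

lemma lub_restrict: "is_lub A le u v z \<Longrightarrow> S \<subseteq> A \<Longrightarrow> z \<in> S \<Longrightarrow> is_lub S le u v z"
  unfolding is_lub_def by blast
lemma glb_restrict: "is_glb A le u v z \<Longrightarrow> S \<subseteq> A \<Longrightarrow> z \<in> S \<Longrightarrow> is_glb S le u v z"
  unfolding is_glb_def by blast

lemma po_sub: "partial_order_on' A le \<Longrightarrow> S \<subseteq> A \<Longrightarrow> partial_order_on' S le"
  unfolding partial_order_on'_def by blast


lemma sl_lub: "sublattice A le S \<Longrightarrow> x \<in> S \<Longrightarrow> y \<in> S \<Longrightarrow> is_lub A le x y z \<Longrightarrow> z \<in> S"
  unfolding sublattice_def by blast
lemma sl_glb: "sublattice A le S \<Longrightarrow> x \<in> S \<Longrightarrow> y \<in> S \<Longrightarrow> is_glb A le x y z \<Longrightarrow> z \<in> S"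
  unfolding sublattice_def by blast
lemma sl_sub: "sublattice A le S \<Longrightarrow> S \<subseteq> A"
  unfolding sublattice_def by blast
lemma fl_lub: "finite_lattice A le \<Longrightarrow> x \<in> A \<Longrightarrow> y \<in> A \<Longrightarrow> \<exists>z. is_lub A le x y z"
  unfolding finite_lattice_def by simp
lemma fl_glb: "finite_lattice A le \<Longrightarrow> x \<in> A \<Longrightarrow> y \<in> A \<Longrightarrow> \<exists>z. is_glb A le x y z"
  unfolding finite_lattice_def by simp

lemma sublattice_fl:
  assumes fl: "finite_lattice A le" and sl: "sublattice A le S" and ne: "S \<noteq> {}"
  shows "finite_lattice S le"
proof -
  have SA: "S \<subseteq> A" using sl_sub[OF sl] .
  have po: "partial_order_on' A le" and fin: "finite A"
    using fl unfolding finite_lattice_def by blast+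
  have L: "\<forall>x\<in>S. \<forall>y\<in>S. (\<exists>z. is_lub S le x y z) \<and> (\<exists>z. is_glb S le x y z)"
  proof (intro ballI)
    fix x y assume x: "x \<in> S" and y: "y \<in> S"
    obtain z where z: "is_lub A le x y z" using fl_lub[OF fl] x y SA by blast
    obtain w where w: "is_glb A le x y w" using fl_glb[OF fl] x y SA by blast
    have zS: "z \<in> S" using sl_lub[OF sl x y z] .
    have wS: "w \<in> S" using sl_glb[OF sl x y w] .
    show "(\<exists>z. is_lub S le x y z) \<and> (\<exists>z. is_glb S le x y z)"
      using lub_restrict[OF z SA zS] glb_restrict[OF w SA wS] by blast
  qed
  have "finite S" using fin SA finite_subset by blast
  moreover have "partial_order_on' S le" using po_sub[OF po SA] .
  ultimately show ?thesis using ne L unfolding finite_lattice_def by simp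
qed

lemma sublattice_sub:
  assumes fl: "finite_lattice A le" and sS: "sublattice A le S" and sT: "sublattice A le T" and TS: "T \<subseteq> S"
  shows "sublattice S le T"
proof -
  have SA: "S \<subseteq> A" using sl_sub[OF sS] .
  have po: "partial_order_on' A le" using fl unfolding finite_lattice_def by blast
  have poS: "partial_order_on' S le" using po_sub[OF po SA] .
  have L: "\<forall>x\<in>T. \<forall>y\<in>T. \<forall>z. (is_lub S le x y z \<longrightarrow> z \<in> T) \<and> (is_glb S le x y z \<longrightarrow> z \<in> T)"
  proof (intro ballI allI)
    fix x y z assume x: "x \<in> T" and y: "y \<in> T"
    have xS: "x \<in> S" "y \<in> S" using x y TS by blast+
    obtain z' where z: "is_lub A le x y z'" using fl_lub[OF fl] xS SA by blast
    obtain w' where w: "is_glb A le x y w'" using fl_glb[OF fl] xS SA by blast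
    have zS: "z' \<in> S" using sl_lub[OF sS xS z] .
    have wS: "w' \<in> S" using sl_glb[OF sS xS w] .
    have zT: "z' \<in> T" using sl_lub[OF sT x y z] .
    have wT: "w' \<in> T" using sl_glb[OF sT x y w] .
    have 1: "is_lub S le x y z'" using lub_restrict[OF z SA zS] .
    have 2: "is_glb S le x y w'" using glb_restrict[OF w SA wS] .
    have a1: "is_lub S le x y z \<Longrightarrow> z \<in> T"
    proof -
      assume h: "is_lub S le x y z"
      have "z' = z" by (rule lub_unique[OF poS 1 h])
      then show "z \<in> T" using zT by simp
    qed
    have a2: "is_glb S le x y z \<Longrightarrow> z \<in> T"
    proof -
      assume h: "is_glb S le x y z"
      have "w' = z" by (rule glb_unique[OF poS 2 h])
      then show "z \<in> T" using wT by simp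
    qed
    show "(is_lub S le x y z \<longrightarrow> z \<in> T) \<and> (is_glb S le x y z \<longrightarrow> z \<in> T)"
      using a1 a2 by blast
  qed
  show ?thesis unfolding sublattice_def using TS L by (intro conjI)
qed




lemma adj_single_agree:
  "x \<notin> S \<Longrightarrow> agree (insert x S) (adjunct_rel S R {x} (\<lambda>_ _. True) p q) (ext S R x {u. R u p} {v. R q v})"
  unfolding agree_def adjunct_rel_def ext_def by auto

lemma ext_match:
  assumes xL: "x \<notin> L" and agR: "\<forall>u\<in>L. \<forall>v\<in>L. le u v \<longleftrightarrow> R u v" and xx: "le x x"
    and D: "\<forall>u\<in>L. le u x \<longleftrightarrow> u \<in> D" and U: "\<forall>v\<in>L. le x v \<longleftrightarrow> v \<in> U"
  shows "\<forall>u\<in>insert x L. \<forall>v\<in>insert x L. le u v \<longleftrightarrow> ext L R x D U u v"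
  using assms unfolding ext_def by auto

lemma finish:
  assumes "adj_chains (insert x L) R' k" "agree (insert x L) R' T"
    "\<forall>u\<in>insert x L. \<forall>v\<in>insert x L. le u v \<longleftrightarrow> T u v"
  shows "adjunct_of_chains (insert x L) le k"
  using assms unfolding adjunct_of_chains_def agree_def by auto

lemma lc_unique:
  assumes fl: "finite_lattice A le" and sl: "sublattice A le L" and L: "L = A - {x}"
    and c1: "covers A le p1 x" and c2: "covers A le p2 x"
  shows "p1 = p2"
proof -
  have p1: "p1 \<in> A" "le p1 x" "p1 \<noteq> x" and p2: "p2 \<in> A" "le p2 x" "p2 \<noteq> x" and xA: "x \<in> A"
    using c1 c2 covers_mem covers_le by metis+
  have p1L: "p1 \<in> L" and p2L: "p2 \<in> L" using p1 p2 L by blast+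
  obtain z where z: "is_lub A le p1 p2 z" using fl_lub[OF fl p1(1) p2(1)] by blast
  have zL: "z \<in> L" using sl_lub[OF sl p1L p2L z] .
  have zx: "le z x" and zA: "z \<in> A" and p1z: "le p1 z" and p2z: "le p2 z"
    using z xA p1 p2 unfolding is_lub_def by blast+
  have "z = p1 \<or> z = x" using covers_between[OF c1 zA p1z zx] by blast
  then have "z = p1" using zL L by blast
  then have "le p2 p1" using p2z by simp
  then have "p1 = p2 \<or> p1 = x" using covers_between[OF c2 p1(1) _ p1(2)] by blast
  then show ?thesis using p1 by blast
qed

lemma uc_unique:
  assumes fl: "finite_lattice A le" and sl: "sublattice A le L" and L: "L = A - {x}"
    and c1: "covers A le x p1" and c2: "covers A le x p2"
  shows "p1 = p2"
proof -
  have p1: "p1 \<in> A" "le x p1" "x \<noteq> p1" and p2: "p2 \<in> A" "le x p2" "x \<noteq> p2" and xA: "x \<in> A"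
    using c1 c2 covers_mem covers_le by metis+
  have p1L: "p1 \<in> L" and p2L: "p2 \<in> L" using p1 p2 L by blast+
  obtain z where z: "is_glb A le p1 p2 z" using fl_glb[OF fl p1(1) p2(1)] by blast
  have zL: "z \<in> L" using sl_glb[OF sl p1L p2L z] .
  have zx: "le x z" and zA: "z \<in> A" and p1z: "le z p1" and p2z: "le z p2"
    using z xA p1 p2 unfolding is_glb_def by blast+
  have "z = x \<or> z = p1" using covers_between[OF c1 zA zx p1z] by blast
  then have "z = p1" using zL L by blast
  then have "le p1 p2" using p2z by simp
  then have "p1 = x \<or> p1 = p2" using covers_between[OF c2 p1(1) p1(2)] by blast
  then show ?thesis using p1 by blast
qed




lemma add_element:
  assumes fl: "finite_lattice A le" and sl: "sublattice A le L" and xA: "x \<in> A"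
    and L: "L = A - {x}" and ne: "L \<noteq> {}" and ad: "adjunct_of_chains L le k"
  shows "\<exists>k'. adjunct_of_chains A le k'"
proof -
  have po: "partial_order_on' A le" and fin: "finite A"
    using fl unfolding finite_lattice_def by blast+
  obtain R where R: "adj_chains L R k" and agR: "\<forall>u\<in>L. \<forall>v\<in>L. le u v \<longleftrightarrow> R u v"
    using ad unfolding adjunct_of_chains_def by blast
  have xL: "x \<notin> L" using L by blast
  have Aeq: "A = insert x L" using L xA by blast
  have LA: "L \<subseteq> A" using L by blast
  have xx: "le x x" using po_refl[OF po xA] .
  have anti: "\<And>u. u \<in> L \<Longrightarrow> le u x \<Longrightarrow> le x u \<Longrightarrow> False"
  proof -
    fix u assume u: "u \<in> L" "le u x" "le x u"
    then have "u = x" using po_anti[OF po _ xA] LA by blast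
    then show False using u xL by blast
  qed
  show ?thesis
  proof (cases "\<forall>y\<in>L. le x y")
    case bot: True
    obtain R' where R': "adj_chains (insert x L) R' k" "agree (insert x L) R' (ext L R x {} L)"
      using ins_bot[OF R xL] by blast
    have "\<forall>u\<in>insert x L. \<forall>v\<in>insert x L. le u v \<longleftrightarrow> ext L R x {} L u v"
      by (rule ext_match[OF xL agR xx]) (use bot anti in auto)
    then show ?thesis using finish[OF R'] Aeq by blast
  next
    case nb: False
    show ?thesis
    proof (cases "\<forall>y\<in>L. le y x")
      case top: True
      obtain R' where R': "adj_chains (insert x L) R' k" "agree (insert x L) R' (ext L R x L {})"
        using ins_top[OF R xL] by blast
      have "\<forall>u\<in>insert x L. \<forall>v\<in>insert x L. le u v \<longleftrightarrow> ext L R x L {} u v"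
        by (rule ext_match[OF xL agR xx]) (use top anti in auto)
      then show ?thesis using finish[OF R'] Aeq by blast
    next
      case nt: False
      obtain y1 where y1: "y1 \<in> L" "\<not> le x y1" using nb by blast
      obtain y2 where y2: "y2 \<in> L" "\<not> le y2 x" using nt by blast
      have "\<exists>y\<in>L. le y x"
      proof (rule ccontr)
        assume no: "\<not> (\<exists>y\<in>L. le y x)"
        obtain g where g: "is_glb A le x y1 g" using fl_glb[OF fl xA] y1 LA by blast
        have gA: "g \<in> A" and gx: "le g x" and gy: "le g y1" using g unfolding is_glb_def by blast+
        have "g = x" using no gA gx L by blast
        then show False using gy y1 by simp
      qed
      then obtain y where y: "y \<in> L" "le y x" by blast
      have "\<exists>y\<in>L. le x y"
      proof (rule ccontr)
        assume no: "\<not> (\<exists>y\<in>L. le x y)"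
        obtain g where g: "is_lub A le x y2 g" using fl_lub[OF fl xA] y2 LA by blast
        have gA: "g \<in> A" and gx: "le x g" and gy: "le y2 g" using g unfolding is_lub_def by blast+
        have "g = x" using no gA gx L by blast
        then show False using gy y2 by simp
      qed
      then obtain y' where y': "y' \<in> L" "le x y'" by blast
      have yx: "y \<noteq> x" "y \<in> A" using y xL LA by blast+
      obtain p where p: "p \<in> A" "le y p" "covers A le p x"
        using cover_below_exists[OF fin po yx(2) xA y(2) yx(1)] by blast
      have y'x: "x \<noteq> y'" "y' \<in> A" using y' xL LA by blast+
      obtain q where q: "q \<in> A" "le q y'" "covers A le x q"
        using cover_above_exists[OF fin po xA y'x(2) y'(2) y'x(1)] by blast
      have pL: "p \<in> L" using p covers_le L by (metis Diff_iff singletonD)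
      have qL: "q \<in> L" using q covers_le L by (metis Diff_iff singletonD)
      have px: "le p x" and xq: "le x q" using p q covers_le by metis+
      have Dc: "\<forall>u\<in>L. le u x \<longleftrightarrow> R u p"
      proof (intro ballI iffI)
        fix u assume u: "u \<in> L" and ux: "le u x"
        have uA: "u \<in> A" using u LA by blast
        have "u \<noteq> x" using u xL by blast
        then obtain p' where p': "p' \<in> A" "le u p'" "covers A le p' x"
          using cover_below_exists[OF fin po uA xA ux] by blast
        have "p' = p" using lc_unique[OF fl sl L p'(3) p(3)] .
        then show "R u p" using agR u pL p'(2) by blast
      next
        fix u assume u: "u \<in> L" and up: "R u p"
        then have "le u p" using agR pL by blast
        then show "le u x" using po_trans[OF po _ p(1) xA _ px] u LA by blast
      qed
      have Uc: "\<forall>v\<in>L. le x v \<longleftrightarrow> R q v"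
      proof (intro ballI iffI)
        fix u assume u: "u \<in> L" and ux: "le x u"
        have uA: "u \<in> A" using u LA by blast
        have "x \<noteq> u" using u xL by blast
        then obtain q' where q': "q' \<in> A" "le q' u" "covers A le x q'"
          using cover_above_exists[OF fin po xA uA ux] by blast
        have "q' = q" using uc_unique[OF fl sl L q'(3) q(3)] .
        then show "R q u" using agR u qL q'(2) by blast
      next
        fix u assume u: "u \<in> L" and up: "R q u"
        then have "le q u" using agR qL by blast
        then show "le x u" using po_trans[OF po xA q(1) _ xq] u LA by blast
      qed
      have M: "\<forall>u\<in>insert x L. \<forall>v\<in>insert x L. le u v \<longleftrightarrow> ext L R x {u. R u p} {v. R q v} u v"
        by (rule ext_match[OF xL agR xx]) (use Dc Uc in auto)
      show ?thesis
      proof (cases "covers L R p q")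
        case True
        obtain R' where R': "adj_chains (insert x L) R' k"
          "agree (insert x L) R' (ext L R x {u. R u p} {v. R q v})"
          using ins_edge[OF R xL True] by blast
        show ?thesis using finish[OF R' M] Aeq by blast
      next
        case False
        have "le p q" using po_trans[OF po p(1) xA q(1) px xq] .
        then have Rpq: "R p q" using agR pL qL by blast
        have pq: "p \<noteq> q" using anti pL px xq by blast
        have ch: "is_chain {x} (\<lambda>_ _. True)" unfolding is_chain_def partial_order_on'_def by simp
        have d: "L \<inter> {x} = {}" using xL by blast
        have F: "adj_chains (L \<union> {x}) (adjunct_rel L R {x} (\<lambda>_ _. True) p q) (Suc k)"
          using adj_chains.step[OF R ch d pL qL Rpq pq False] .
        have e: "L \<union> {x} = insert x L" by blast
        show ?thesis using finish[OF F[unfolded e] adj_single_agree[OF xL] M] Aeq by blast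
      qed
    qed
  qed
qed




lemma L_mono:
  assumes st: "\<forall>i. 1 \<le> i \<and> i < n \<longrightarrow> L i \<subset> L (Suc i)" and i: "1 \<le> i" and ij: "i \<le> j" and jn: "j \<le> n"
  shows "L i \<subseteq> L j"
  using ij jn
proof (induction j rule: dec_induct)
  case base then show ?case by simp
next
  case (step m)
  then have "L m \<subset> L (Suc m)" using st i by simp
  then show ?case using step by auto
qed

lemma dism_adj:
  "finite_lattice A le \<Longrightarrow> (\<forall>i\<in>{1..card A}. sublattice A le (L i) \<and> card (L i) = i) \<Longrightarrow>
   (\<forall>i. 1 \<le> i \<and> i < card A \<longrightarrow> L i \<subset> L (Suc i)) \<Longrightarrow> L (card A) = A \<Longrightarrow>
   \<exists>k. adjunct_of_chains A le k"
proof (induction "card A" arbitrary: A rule: less_induct)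
  case less
  have fl: "finite_lattice A le" using less.prems(1) .
  have po: "partial_order_on' A le" and fin: "finite A" and neA: "A \<noteq> {}"
    using fl unfolding finite_lattice_def by blast+
  have c1: "card A \<ge> 1" using fin neA by (simp add: Suc_le_eq card_gt_0_iff)
  show ?case
  proof (cases "card A = 1")
    case True
    then obtain x where Ax: "A = {x}" by (rule card_1_singletonE)
    have "is_chain A le" using po Ax unfolding is_chain_def partial_order_on'_def by auto
    then have "adj_chains A le 0" by (rule adj_chains.base)
    then show ?thesis unfolding adjunct_of_chains_def by blast
  next
    case False
    define n where "n = card A - 1"
    have n: "card A = Suc n" "n \<ge> 1" using c1 False unfolding n_def by arith+
    have slA: "\<And>i. 1 \<le> i \<Longrightarrow> i \<le> card A \<Longrightarrow> sublattice A le (L i) \<and> card (L i) = i"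
      using less.prems(2) by simp
    have stA: "\<forall>i. 1 \<le> i \<and> i < card A \<longrightarrow> L i \<subset> L (Suc i)" using less.prems(3) .
    have "L n \<subset> L (Suc n)" using stA n by simp
    then have sub: "L n \<subset> A" using less.prems(4) n by simp
    have sln: "sublattice A le (L n)" and cn: "card (L n) = n" using slA[of n] n by auto
    have finL: "finite (L n)" using sub fin finite_subset by blast
    have "card (A - L n) = 1" using card_Diff_subset[OF finL] sub n cn by auto
    then obtain x where x: "A - L n = {x}" by (rule card_1_singletonE)
    have xA: "x \<in> A" using x by blast
    have Leq: "L n = A - {x}" using x sub by blast
    have neL: "L n \<noteq> {}" using cn n by auto
    have flL: "finite_lattice (L n) le" using sublattice_fl[OF fl sln neL] .
    have IHp2: "\<forall>i\<in>{1..card (L n)}. sublattice (L n) le (L i) \<and> card (L i) = i"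
    proof
      fix i assume i: "i \<in> {1..card (L n)}"
      then have i1: "1 \<le> i" and i2: "i \<le> n" using cn by auto
      have sli: "sublattice A le (L i)" and ci: "card (L i) = i" using slA[of i] i1 i2 n by auto
      have "L i \<subseteq> L n" using L_mono[OF stA i1 i2] n by simp
      then show "sublattice (L n) le (L i) \<and> card (L i) = i"
        using sublattice_sub[OF fl sln sli] ci by blast
    qed
    have IHp3: "\<forall>i. 1 \<le> i \<and> i < card (L n) \<longrightarrow> L i \<subset> L (Suc i)" using stA cn n by simp
    have lt: "card (L n) < card A" using cn n by simp
    have IHp4: "L (card (L n)) = L n" using cn by simp
    obtain k where "adjunct_of_chains (L n) le k"
      using less.hyps[OF lt flL IHp2 IHp3 IHp4] by blast
    then show ?thesis using add_element[OF fl sln xA Leq neL] by blast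
  qed
qed

theorem mainTheorem2:
  fixes A :: "'a set" and le :: "'a \<Rightarrow> 'a \<Rightarrow> bool" and r :: nat
  assumes "dismantlable A le"
  shows "nullity A le = int r \<longleftrightarrow> adjunct_of_chains A le r"
proof -
  have fl: "finite_lattice A le" using assms by (simp add: dismantlable_def)
  obtain L :: "nat \<Rightarrow> 'a set" where L: "\<forall>i\<in>{1..card A}. sublattice A le (L i) \<and> card (L i) = i"
    "\<forall>i. 1 \<le> i \<and> i < card A \<longrightarrow> L i \<subset> L (Suc i)" "L (card A) = A"
    using assms unfolding dismantlable_def by blast
  obtain k where k: "adjunct_of_chains A le k" using dism_adj[OF fl L] by blast
  have nk: "nullity A le = int k" using nullity_adj[OF fl k] .
  show ?thesis
  proof
    assume "nullity A le = int r"
    then have "r = k" using nk by simp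
    then show "adjunct_of_chains A le r" using k by simp
  next
    assume "adjunct_of_chains A le r"
    then show "nullity A le = int r" using nullity_adj[OF fl] by blast
  qed
qed


end
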